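(* Fix an integer $r\ge2$ and $\epsilon>0$. There exists $d_0$ such that for every fixed integer $d>d_0$, if $G$ is sampled from the configuration model $G^*(n,d)$ (with $nd$ even), then with probability $1-o(1)$ as $n\to\infty$, $m(G,r)\ge n\,d^{-\left(\frac{r}{r-1}+\epsilon\right)}$.
   Context: The configuration model $G^*(n,d)$: take cells $W=[n]\times[d]$, choose a uniformly random perfect matching of $W$, and for each matched pair of cells $(i,a),(j,b)$ add an edge between vertices $i$ and $j$ (the result may be a multigraph with loops and parallel edges). In bootstrap percolation the neighborhood $N(v)$ of a vertex is the set of distinct vertices $u\neq v$ joined to $v$ by at least one edge. Bootstrap percolation with threshold $r\ge 2$: given seeds $A_0\subseteq V$, $A_i=A_{i-1}\cup\{v:|N(v)\cap A_{i-1}|\ge r\}$ for $i\ge 1$, $\langle A_0\rangle=\bigcup_iA_i$; $A_0$ is contagious if $\langle A_0\rangle=V$, and $m(G,r)$ is the minimum size of a contagious set. *)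

theory Defs
  imports Complex_Main
begin

definition cells :: "nat \<Rightarrow> nat \<Rightarrow> (nat \<times> nat) set" where
  "cells n d = {0..<n} \<times> {0..<d}"

definition perfect_matchings :: "nat \<Rightarrow> nat \<Rightarrow> (nat \<times> nat) set set set" where
  "perfect_matchings n d = {M. (\<forall>e\<in>M. card e = 2 \<and> e \<subseteq> cells n d)
      \<and> (\<forall>e\<in>M. \<forall>e'\<in>M. e \<noteq> e' \<longrightarrow> e \<inter> e' = {})
      \<and> \<Union>M = cells n d}"

definition nbr :: "(nat \<times> nat) set set \<Rightarrow> nat \<Rightarrow> nat set" where
  "nbr M v = {u. u \<noteq> v \<and> (\<exists>a b. {(v, a), (u, b)} \<in> M)}"

definition bp_step :: "nat \<Rightarrow> nat \<Rightarrow> (nat \<times> nat) set set \<Rightarrow> nat set \<Rightarrow> nat set" where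
  "bp_step n r M A = A \<union> {v \<in> {0..<n}. card (nbr M v \<inter> A) \<ge> r}"

definition bp_closure :: "nat \<Rightarrow> nat \<Rightarrow> (nat \<times> nat) set set \<Rightarrow> nat set \<Rightarrow> nat set" where
  "bp_closure n r M A0 = (\<Union>i. (bp_step n r M ^^ i) A0)"

definition contagious :: "nat \<Rightarrow> nat \<Rightarrow> (nat \<times> nat) set set \<Rightarrow> nat set \<Rightarrow> bool" where
  "contagious n r M A0 \<longleftrightarrow> A0 \<subseteq> {0..<n} \<and> bp_closure n r M A0 = {0..<n}"

text \<open>m(G,r): minimum size of a contagious set (the vertex set itself is contagious).\<close>
definition min_contagious :: "nat \<Rightarrow> nat \<Rightarrow> (nat \<times> nat) set set \<Rightarrow> nat" where
  "min_contagious n r M = (LEAST k. \<exists>A. contagious n r M A \<and> card A = k)"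

definition config_prob :: "nat \<Rightarrow> nat \<Rightarrow> ((nat \<times> nat) set set \<Rightarrow> bool) \<Rightarrow> real" where
  "config_prob n d P = real (card {M \<in> perfect_matchings n d. P M}) / real (card (perfect_matchings n d))"

end

theory Submission
  imports Defs
begin



lemma exp_ge_term:
  fixes x :: real assumes "x \<ge> 0" shows "x ^ k / fact k \<le> exp x"
proof -
  have s: "(\<lambda>n. x^n / fact n) sums exp x"
    using exp_converges[of x] by (simp add: divide_inverse mult.commute)
  have "(\<Sum>n\<in>{k}. x^n / fact n) \<le> exp x"
    using sum_le_suminf[OF sums_summable[OF s], of "{k}"] assms sums_unique[OF s]
    by simp
  then show ?thesis by simp
qed

lemma fact_choose_le: "fact k * (n choose k) \<le> n ^ k"
proof (cases "k \<le> n")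
  case True
  have "fact k * (n choose k) = fact n div fact (n - k)"
    using binomial_fact_lemma[OF True] 
    by (metis fact_nonzero nonzero_mult_div_cancel_right mult.assoc mult.commute)
  then show ?thesis using fact_div_fact_le_pow[OF True] by simp
next
  case False then show ?thesis by (simp add: binomial_eq_0)
qed

lemma choose_le_real:
  assumes "k > 0"
  shows "real (n choose k) \<le> (exp 1 * real n / real k) ^ k"
proof -
  have "real (fact k * (n choose k)) \<le> real n ^ k"
    using fact_choose_le[of k n] by (metis of_nat_le_iff of_nat_power)
  then have 1: "real (n choose k) \<le> real n ^ k / fact k"
    by (simp add: field_simps)
  have "real k ^ k / fact k \<le> exp (real k)" by (rule exp_ge_term) simp
  then have "fact k \<ge> real k ^ k / exp (real k)" by (simp add: field_simps)
  have "real n ^ k / fact k \<le> real n ^ k / (real k ^ k / exp (real k))"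
    apply (rule divide_left_mono) using \<open>fact k \<ge> _\<close> assms by auto
  also have "\<dots> = (exp 1 * real n / real k) ^ k"
  proof -
    have e: "exp (real k) = exp 1 ^ k" by (metis exp_of_nat_mult mult.right_neutral)
    show ?thesis using assms by (simp add: e power_mult_distrib power_divide field_simps)
  qed
  finally show ?thesis using 1 by linarith
qed



definition pm :: "'a set \<Rightarrow> 'a set set set" where
  "pm S = {M. (\<forall>e\<in>M. card e = 2 \<and> e \<subseteq> S) \<and> (\<forall>e\<in>M. \<forall>e'\<in>M. e \<noteq> e' \<longrightarrow> e \<inter> e' = {}) \<and> \<Union>M = S}"

lemma pm_cells: "perfect_matchings n d = pm (cells n d)"
  unfolding perfect_matchings_def pm_def by simp

lemma pm_subset: "pm S \<subseteq> Pow (Pow S)"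
  unfolding pm_def by auto

lemma finite_pm: "finite S \<Longrightarrow> finite (pm S)"
  using pm_subset by (meson finite_Pow_iff finite_subset)

lemma pm_empty: "pm {} = {{}}"
  unfolding pm_def by auto

lemma pm_inj_le:
  assumes "inj_on f S" "f ` S = T" "finite T"
  shows "card (pm S) \<le> card (pm T)"
proof -
  let ?g = "\<lambda>M. (`) f ` M"
  have inj: "inj_on ?g (pm S)"
  proof (rule inj_onI)
    fix M1 M2 assume m: "M1 \<in> pm S" "M2 \<in> pm S" "?g M1 = ?g M2"
    have "inj_on ((`) f) (Pow S)" by (rule inj_on_image_Pow[OF assms(1)])
    moreover have "M1 \<subseteq> Pow S" "M2 \<subseteq> Pow S" using m(1,2) unfolding pm_def by auto
    ultimately show "M1 = M2" using m(3) by (simp add: inj_on_image_eq_iff)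
  qed
  have into: "?g ` pm S \<subseteq> pm T"
  proof
    fix X assume "X \<in> ?g ` pm S"
    then obtain M where M: "M \<in> pm S" "X = ?g M" by auto
    have a: "\<forall>e\<in>M. card e = 2 \<and> e \<subseteq> S" and b: "\<forall>e\<in>M. \<forall>e'\<in>M. e \<noteq> e' \<longrightarrow> e \<inter> e' = {}"
      and c: "\<Union>M = S" using M(1) unfolding pm_def by auto
    have p1: "\<forall>e\<in>X. card e = 2 \<and> e \<subseteq> T"
    proof
      fix e' assume "e' \<in> X"
      then obtain e where "e \<in> M" "e' = f ` e" using M by auto
      moreover have "inj_on f e" using a \<open>e\<in>M\<close> assms(1) inj_on_subset by blast
      ultimately show "card e' = 2 \<and> e' \<subseteq> T" using a assms(2) by (auto simp: card_image)
    qed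
    have p2: "\<forall>e\<in>X. \<forall>e'\<in>X. e \<noteq> e' \<longrightarrow> e \<inter> e' = {}"
    proof (intro ballI impI)
      fix x y assume "x \<in> X" "y \<in> X" "x \<noteq> y"
      then obtain e e' where "e \<in> M" "e' \<in> M" "x = f ` e" "y = f ` e'" using M by auto
      then have "e \<noteq> e'" using \<open>x\<noteq>y\<close> by auto
      then have "e \<inter> e' = {}" using b \<open>e\<in>M\<close> \<open>e'\<in>M\<close> by auto
      moreover have "e \<subseteq> S" "e' \<subseteq> S" using a \<open>e\<in>M\<close> \<open>e'\<in>M\<close> by auto
      ultimately show "x \<inter> y = {}" using \<open>x = _\<close> \<open>y = _\<close> inj_on_image_Int[OF assms(1), of e e']
        by simp
    qed
    have p3: "\<Union>X = T" using M c assms(2) by (simp add: image_Union[symmetric])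
    show "X \<in> pm T" unfolding pm_def using p1 p2 p3 by simp
  qed
  show ?thesis using card_inj_on_le[OF inj into finite_pm[OF assms(3)]] .
qed

lemma pm_card_eq:
  assumes "finite S" "finite T" "card S = card T"
  shows "card (pm S) = card (pm T)"
proof -
  obtain f where f: "bij_betw f S T" using assms by (metis bij_betw_iff_card)
  then have g: "bij_betw (inv_into S f) T S" by (rule bij_betw_inv_into)
  show ?thesis using pm_inj_le[of f S T] pm_inj_le[of "inv_into S f" T S] f g assms
    unfolding bij_betw_def by fastforce
qed

lemma pm_insert_mem:
  assumes "M \<in> pm (S - {a, c})" "a \<in> S" "c \<in> S" "a \<noteq> c"
  shows "insert {a, c} M \<in> pm S"
  using assms unfolding pm_def by auto

lemma pm_step:
  assumes "finite S" "a \<in> S" "b \<in> S" "a \<noteq> b"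
  shows "(card S - 1) * card (pm (S - {a, b})) \<le> card (pm S)"
proof -
  define Img where "Img c = insert {a, c} ` pm (S - {a, c})" for c
  have sub: "Img c \<subseteq> pm S" if "c \<in> S - {a}" for c
    unfolding Img_def
  proof (rule image_subsetI)
    fix M assume "M \<in> pm (S - {a, c})"
    then show "insert {a, c} M \<in> pm S" by (rule pm_insert_mem) (use that assms in auto)
  qed
  have cardI: "card (Img c) = card (pm (S - {a, b}))" if "c \<in> S - {a}" for c
  proof -
    have "inj_on (insert {a, c}) (pm (S - {a, c}))"
    proof (rule inj_onI)
      fix M1 M2 assume m: "M1 \<in> pm (S - {a, c})" "M2 \<in> pm (S - {a, c})" "insert {a, c} M1 = insert {a, c} M2"
      have "{a, c} \<notin> M1" "{a, c} \<notin> M2" using m unfolding pm_def by auto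
      then show "M1 = M2" using m(3) by (metis insert_ident)
    qed
    then have "card (Img c) = card (pm (S - {a, c}))" unfolding Img_def by (simp add: card_image)
    also have "\<dots> = card (pm (S - {a, b}))"
      apply (rule pm_card_eq) using assms that by auto
    finally show ?thesis .
  qed
  have disj: "Img c \<inter> Img c' = {}" if "c \<in> S - {a}" "c' \<in> S - {a}" "c \<noteq> c'" for c c'
  proof (rule ccontr)
    assume "Img c \<inter> Img c' \<noteq> {}"
    then obtain M1 M2 where m: "M1 \<in> pm (S - {a, c})" "M2 \<in> pm (S - {a, c'})" "insert {a, c} M1 = insert {a, c'} M2"
      unfolding Img_def by auto
    have "{a, c} \<noteq> {a, c'}" using that by (metis doubleton_eq_iff)
    then have "{a, c} \<in> M2" using m(3) by blast
    then show False using m(2) unfolding pm_def by auto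
  qed
  have fin: "finite (Img c)" if "c \<in> S - {a}" for c
    using finite_subset[OF sub[OF that] finite_pm[OF assms(1)]] .
  have "card (\<Union>c\<in>S - {a}. Img c) = (\<Sum>c\<in>S - {a}. card (Img c))"
    apply (rule card_UN_disjoint) using assms fin disj by auto
  also have "\<dots> = (card S - 1) * card (pm (S - {a, b}))"
    using cardI assms by simp
  finally have "(card S - 1) * card (pm (S - {a, b})) = card (\<Union>c\<in>S - {a}. Img c)" by simp
  also have "\<dots> \<le> card (pm S)"
    apply (rule card_mono[OF finite_pm[OF assms(1)]]) using sub by auto
  finally show ?thesis .
qed
lemma pm_prod:
  "finite S \<Longrightarrow> X \<subseteq> S \<Longrightarrow> card X = 2 * m \<Longrightarrow>
   (\<Prod>j<m. card S - 1 - 2 * j) * card (pm (S - X)) \<le> card (pm S)"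
proof (induction m arbitrary: S X)
  case 0
  then have "X = {}" using finite_subset[OF "0.prems"(2) "0.prems"(1)] by simp
  then show ?case by simp
next
  case (Suc m)
  have "card X \<ge> 2" using Suc by simp
  have finX0: "finite X" using Suc.prems finite_subset by blast
  have "X \<noteq> {}" using \<open>card X \<ge> 2\<close> by auto
  then obtain a where a: "a \<in> X" by blast
  have "card (X - {a}) \<ge> 1" using \<open>card X \<ge> 2\<close> a finX0 by simp
  then have "X - {a} \<noteq> {}" by (metis card.empty not_one_le_zero)
  then obtain b where b: "b \<in> X - {a}" by blast
  have ab: "a \<in> X" "b \<in> X" "a \<noteq> b" using a b by auto
  define S' where "S' = S - {a, b}"
  define X' where "X' = X - {a, b}"
  have finX: "finite X" using Suc.prems finite_subset by blast
  have cX': "card X' = 2 * m" unfolding X'_def using Suc.prems(3) ab finX by (simp add: card_Diff_subset)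
  have IH: "(\<Prod>j<m. card S' - 1 - 2 * j) * card (pm (S' - X')) \<le> card (pm S')"
    apply (rule Suc.IH) using Suc.prems cX' unfolding S'_def X'_def by auto
  have e1: "S' - X' = S - X" unfolding S'_def X'_def using ab by auto
  have cS': "card S' = card S - 2"
  proof -
    have "{a, b} \<subseteq> S" using Suc.prems(2) ab by auto
    then have "card S' = card S - card {a, b}" unfolding S'_def
      using Suc.prems(1) by (simp add: card_Diff_subset finite_subset)
    then show ?thesis using ab by simp
  qed
  have step: "(card S - 1) * card (pm S') \<le> card (pm S)"
    unfolding S'_def apply (rule pm_step) using Suc.prems ab by auto
  have pr: "(\<Prod>j<Suc m. card S - 1 - 2 * j) = (card S - 1) * (\<Prod>j<m. card S' - 1 - 2 * j)"
    unfolding prod.lessThan_Suc_shift cS' by (simp add: algebra_simps)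
  have "(\<Prod>j<Suc m. card S - 1 - 2 * j) * card (pm (S - X)) = (card S - 1) * ((\<Prod>j<m. card S' - 1 - 2 * j) * card (pm (S' - X')))"
    using pr e1 by simp
  also have "\<dots> \<le> (card S - 1) * card (pm S')" using IH by simp
  also have "\<dots> \<le> card (pm S)" using step .
  finally show ?case .
qed

lemma pm_fixed:
  assumes "finite S" "F \<subseteq> M0" "M0 \<in> pm S"
  shows "card {M \<in> pm S. F \<subseteq> M} \<le> card (pm (S - \<Union>F))"
proof -
  have inj: "inj_on (\<lambda>M. M - F) {M \<in> pm S. F \<subseteq> M}"
    by (rule inj_onI) auto
  have into: "(\<lambda>M. M - F) ` {M \<in> pm S. F \<subseteq> M} \<subseteq> pm (S - \<Union>F)"
  proof
    fix X assume "X \<in> (\<lambda>M. M - F) ` {M \<in> pm S. F \<subseteq> M}"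
    then obtain M where M: "M \<in> pm S" "F \<subseteq> M" "X = M - F" by auto
    have a: "\<forall>e\<in>M. card e = 2 \<and> e \<subseteq> S" and b: "\<forall>e\<in>M. \<forall>e'\<in>M. e \<noteq> e' \<longrightarrow> e \<inter> e' = {}"
      and c: "\<Union>M = S" using M(1) unfolding pm_def by auto
    have d: "e \<inter> \<Union>F = {}" if "e \<in> X" for e
    proof -
      have "e \<in> M" "e \<notin> F" using that M(3) by auto
      then have "e \<inter> f = {}" if "f \<in> F" for f
      proof -
        have "f \<in> M" "e \<noteq> f" using M(2) that \<open>e \<notin> F\<close> by auto
        then show ?thesis using b \<open>e \<in> M\<close> by blast
      qed
      then show ?thesis by auto
    qed
    have p1: "\<forall>e\<in>X. card e = 2 \<and> e \<subseteq> S - \<Union>F"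
      using a d M(3) by blast
    have p2: "\<forall>e\<in>X. \<forall>e'\<in>X. e \<noteq> e' \<longrightarrow> e \<inter> e' = {}" using b M(3) by blast
    have p3: "\<Union>X = S - \<Union>F"
    proof
      show "\<Union>X \<subseteq> S - \<Union>F" using p1 by blast
      show "S - \<Union>F \<subseteq> \<Union>X" using c M(2,3) by blast
    qed
    show "X \<in> pm (S - \<Union>F)" unfolding pm_def using p1 p2 p3 by simp
  qed
  show ?thesis using card_inj_on_le[OF inj into finite_pm] assms by auto
qed



definition eU :: "(nat \<times> nat) set set \<Rightarrow> nat set \<Rightarrow> (nat \<times> nat) set set" where
  "eU M U = {e \<in> M. e \<subseteq> U \<times> UNIV}"

lemma grow:
  assumes "finite M" "v \<notin> U" "W \<subseteq> U" "card (nbr M v \<inter> W) \<ge> r" "r \<ge> 1"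
  shows "card (eU M (insert v U)) \<ge> card (eU M U) + r"
proof -
  let ?Nb = "nbr M v \<inter> W"
  have finNb: "finite ?Nb"
  proof (rule ccontr)
    assume "\<not> finite ?Nb" then have "card ?Nb = 0" by simp
    then show False using assms(4,5) by simp
  qed
  define g where "g u = (SOME e. e \<in> M \<and> (\<exists>a b. e = {(v, a), (u, b)}))" for u
  have g: "g u \<in> M \<and> (\<exists>a b. g u = {(v, a), (u, b)})" if "u \<in> ?Nb" for u
  proof -
    have "\<exists>e. e \<in> M \<and> (\<exists>a b. e = {(v, a), (u, b)})" using that unfolding nbr_def by auto
    then show ?thesis unfolding g_def by (rule someI_ex)
  qed
  have uv: "u \<noteq> v" if "u \<in> ?Nb" for u using that unfolding nbr_def by auto
  have inj: "inj_on g ?Nb"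
  proof (rule inj_onI)
    fix u u' assume u: "u \<in> ?Nb" "u' \<in> ?Nb" "g u = g u'"
    obtain a b where ab: "g u = {(v, a), (u, b)}" using g[OF u(1)] by blast
    obtain a' b' where ab': "g u' = {(v, a'), (u', b')}" using g[OF u(2)] by blast
    have "(u, b) \<in> {(v, a'), (u', b')}" using ab ab' u(3) by auto
    then show "u = u'" using uv[OF u(1)] by auto
  qed
  have sub1: "g ` ?Nb \<subseteq> eU M (insert v U)"
  proof
    fix e assume "e \<in> g ` ?Nb"
    then obtain u where u: "u \<in> ?Nb" "e = g u" by auto
    from g[OF u(1)] obtain a b where ab: "g u \<in> M" "g u = {(v, a), (u, b)}" by blast
    have "u \<in> U" using u(1) assms(3) by blast
    then show "e \<in> eU M (insert v U)" unfolding eU_def using ab u(2) by auto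
  qed
  have disj: "g ` ?Nb \<inter> eU M U = {}"
  proof (rule ccontr)
    assume "g ` ?Nb \<inter> eU M U \<noteq> {}"
    then obtain u where u: "u \<in> ?Nb" "g u \<in> eU M U" by auto
    from g[OF u(1)] obtain a b where "g u = {(v, a), (u, b)}" by blast
    then have "(v, a) \<in> U \<times> UNIV" using u(2) unfolding eU_def by auto
    then show False using assms(2) by auto
  qed
  have sub2: "eU M U \<subseteq> eU M (insert v U)" unfolding eU_def by auto
  have fin: "finite (eU M (insert v U))" unfolding eU_def using assms(1) by simp
  have "card (eU M U) + r \<le> card (eU M U) + card (g ` ?Nb)"
    using card_image[OF inj] assms(4) by simp
  also have "\<dots> = card (eU M U \<union> g ` ?Nb)"
    apply (rule card_Un_disjoint[symmetric])
    using finite_subset[OF sub2 fin] finNb disj by auto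
  also have "\<dots> \<le> card (eU M (insert v U))"
    apply (rule card_mono[OF fin]) using sub1 sub2 by auto
  finally show ?thesis .
qed

lemma bp_suc: "(bp_step n r M ^^ Suc i) A0 = bp_step n r M ((bp_step n r M ^^ i) A0)"
  by simp

lemma bp_inc: "(bp_step n r M ^^ i) A0 \<subseteq> (bp_step n r M ^^ Suc i) A0"
  unfolding bp_suc bp_step_def by auto

lemma bp_mono: "i \<le> j \<Longrightarrow> (bp_step n r M ^^ i) A0 \<subseteq> (bp_step n r M ^^ j) A0"
proof (induction j)
  case 0 then show ?case by simp
next
  case (Suc j)
  then show ?case using bp_inc[of j n r M A0] by (metis le_SucE order_refl order_trans)
qed

lemma bp_bound: "A0 \<subseteq> {0..<n} \<Longrightarrow> (bp_step n r M ^^ i) A0 \<subseteq> {0..<n}"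
  by (induction i) (auto simp: bp_step_def)

lemma bp_stable:
  assumes "(bp_step n r M ^^ Suc i) A0 = (bp_step n r M ^^ i) A0"
  shows "j \<ge> i \<Longrightarrow> (bp_step n r M ^^ j) A0 = (bp_step n r M ^^ i) A0"
proof (induction j)
  case 0 then show ?case by simp
next
  case (Suc j)
  show ?case
  proof (cases "j \<ge> i")
    case True
    then show ?thesis using Suc.IH assms by (metis bp_suc)
  next
    case False
    then have "Suc j = i" using Suc.prems by simp
    then show ?thesis by simp
  qed
qed

lemma det_chain:
  fixes M :: "(nat \<times> nat) set set"
  assumes finM: "finite M" and con: "contagious n r M A0" and r: "r \<ge> 1"
  shows "t \<le> n - card A0 \<Longrightarrow> \<exists>U i. (bp_step n r M ^^ i) A0 \<subseteq> U \<and> U \<subseteq> (bp_step n r M ^^ Suc i) A0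
           \<and> card U = card A0 + t \<and> card (eU M U) \<ge> r * t"
proof (induction t)
  case 0
  show ?case
    apply (rule exI[of _ A0], rule exI[of _ 0]) using bp_inc[of 0 n r M A0] by auto
next
  case (Suc t)
  let ?A = "\<lambda>i. (bp_step n r M ^^ i) A0"
  have A0n: "A0 \<subseteq> {0..<n}" and cl: "bp_closure n r M A0 = {0..<n}"
    using con unfolding contagious_def by auto
  obtain U i where U: "?A i \<subseteq> U" "U \<subseteq> ?A (Suc i)" "card U = card A0 + t" "card (eU M U) \<ge> r * t"
    using Suc by auto
  have ltn: "card U < n" using U(3) Suc.prems by linarith
  have Un: "U \<subseteq> {0..<n}" using U(2) bp_bound[OF A0n, where i="Suc i" and r=r and M=M] by blast
  have finU: "finite U" using finite_subset[OF Un] by simp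
  obtain v j where vj: "v \<notin> U" "?A j \<subseteq> U" "v \<in> ?A (Suc j)" "insert v U \<subseteq> ?A (Suc j)"
    "?A j \<subseteq> insert v U"
  proof (cases "U = ?A (Suc i)")
    case False
    then obtain v where "v \<in> ?A (Suc i)" "v \<notin> U" using U(2) by blast
    show ?thesis
    proof (rule that[of v i])
      show "v \<notin> U" by fact
      show "?A i \<subseteq> U" by (rule U(1))
      show "v \<in> ?A (Suc i)" by fact
      show "insert v U \<subseteq> ?A (Suc i)" using U(2) \<open>v \<in> ?A (Suc i)\<close> by blast
      show "?A i \<subseteq> insert v U" using U(1) by blast
    qed
  next
    case True
    have "?A (Suc (Suc i)) \<noteq> ?A (Suc i)"
    proof
      assume eq: "?A (Suc (Suc i)) = ?A (Suc i)"
      have "bp_closure n r M A0 \<subseteq> ?A (Suc i)"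
        unfolding bp_closure_def
      proof (rule UN_least)
        fix j
        show "?A j \<subseteq> ?A (Suc i)"
        proof (cases "j \<le> Suc i")
          case True then show ?thesis by (rule bp_mono)
        next
          case False then show ?thesis using bp_stable[OF eq, of j] by simp
        qed
      qed
      then have sU: "{0..<n} \<subseteq> U" using cl True by simp
      have "card {0..<n} \<le> card U" by (rule card_mono[OF finU sU])
      then have "n \<le> card U" by simp
      then show False using ltn by simp
    qed
    then obtain v where "v \<in> ?A (Suc (Suc i))" "v \<notin> U"
      using bp_inc[of "Suc i" n r M A0] True by blast
    show ?thesis
    proof (rule that[of v "Suc i"])
      show "v \<notin> U" by fact
      show "?A (Suc i) \<subseteq> U" using True by simp
      show "v \<in> ?A (Suc (Suc i))" by fact
      show "insert v U \<subseteq> ?A (Suc (Suc i))" using True bp_inc[of "Suc i" n r M A0] \<open>v \<in> ?A (Suc (Suc i))\<close> by blast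
      show "?A (Suc i) \<subseteq> insert v U" using True by blast
    qed
  qed
  have "v \<notin> ?A j" using vj by auto
  then have "card (nbr M v \<inter> ?A j) \<ge> r" using vj(3) unfolding bp_suc bp_step_def by auto
  then have g: "card (eU M (insert v U)) \<ge> card (eU M U) + r"
    by (rule grow[OF finM vj(1) vj(2) _ r])
  have c1: "card (insert v U) = card A0 + Suc t" using vj(1) finU U(3) by simp
  have c2: "card (eU M (insert v U)) \<ge> r * Suc t" using g U(4) by simp
  show ?case
    apply (rule exI[of _ "insert v U"], rule exI[of _ j])
    using vj(5,4) c1 c2 by blast
qed

lemma det_main:
  fixes M :: "(nat \<times> nat) set set"
  assumes finM: "finite M" and con: "contagious n r M A0" and r: "r \<ge> 1"
    and s: "card A0 \<le> s" "s \<le> n"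
  shows "\<exists>U. U \<subseteq> {0..<n} \<and> card U = s \<and> card (eU M U) \<ge> r * (s - card A0)"
proof -
  obtain U i where U: "(bp_step n r M ^^ i) A0 \<subseteq> U" "U \<subseteq> (bp_step n r M ^^ Suc i) A0"
     "card U = card A0 + (s - card A0)" "card (eU M U) \<ge> r * (s - card A0)"
  proof -
    have "s - card A0 \<le> n - card A0" using s by simp
    from det_chain[OF finM con r this] show ?thesis using that s by auto
  qed
  have "A0 \<subseteq> {0..<n}" using con unfolding contagious_def by auto
  then have "U \<subseteq> {0..<n}" using U(2) bp_bound by blast
  then show ?thesis using U s by auto
qed




lemma inner:
  fixes r L :: nat and \<epsilon> d y :: real
  assumes r: "r \<ge> 2" and L: "L \<ge> 2" and eps: "\<epsilon> > 0"
    and Lc: "\<epsilon> * ((real r - 1) * real L - real r) \<ge> real r / (real r - 1) + 1"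
    and d1: "d \<ge> 1"
    and dC: "d \<ge> 2 * (exp 1 ^ L * (exp 1 * real L ^ 2) ^ (r * (L - 1)))"
    and y: "0 < y" "y \<le> d powr (- (real r / (real r - 1) + \<epsilon>))"
  shows "(exp 1 / (real L * y)) ^ L * (exp 1 * real L ^ 2 * y * d / (real r * real (L - 1))) ^ (r * (L - 1)) \<le> 1 / 2"
proof -
  define R where "R = r * (L - 1)"
  define q where "q = R - L"
  define \<alpha> where "\<alpha> = real r / (real r - 1) + \<epsilon>"
  define C where "C = exp 1 ^ L * (exp 1 * real L ^ 2) ^ R"
  have RqL: "R = q + L" unfolding q_def R_def using r L
  proof -
    have "r * (L - 1) \<ge> 2 * (L - 1)" using r by simp
    moreover have "2 * (L - 1) \<ge> L" using L by simp
    ultimately have "L \<le> r * (L - 1)" by linarith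
    then show "r * (L - 1) = r * (L - 1) - L + L" by simp
  qed
  have rr: "real r - 1 > 0" using r by simp
  have qreal: "real q = (real r - 1) * real L - real r"
  proof -
    have "real R = real q + real L" using RqL by simp
    moreover have "real R = real r * (real L - 1)" unfolding R_def using L by (simp add: of_nat_diff)
    ultimately show ?thesis by (simp add: algebra_simps)
  qed
  have expo: "real R - \<alpha> * real q \<le> -1"
  proof -
    have eR: "real R = real r * real L - real r" unfolding R_def using L by (simp add: of_nat_diff algebra_simps)
    have "real R - real r / (real r - 1) * real q = real r / (real r - 1)"
      using rr unfolding qreal eR by (simp add: field_simps)
    moreover have "real R - \<alpha> * real q = (real R - real r / (real r - 1) * real q) - \<epsilon> * real q"
      unfolding \<alpha>_def by (simp add: algebra_simps)
    moreover have "\<epsilon> * real q \<ge> real r / (real r - 1) + 1" using Lc qreal by simp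
    ultimately show ?thesis by linarith
  qed
  have e0: "exp 1 > (0::real)" by simp
  have t1: "exp 1 / (real L * y) \<le> exp 1 / y"
    using L y(1) by (simp add: frac_le)
  have t2: "exp 1 * real L ^ 2 * y * d / (real r * real (L - 1)) \<le> exp 1 * real L ^ 2 * y * d"
  proof -
    have "real r * real (L - 1) \<ge> 1 * 1" by (rule mult_mono) (use r L in auto)
    then have h1: "1 \<le> real r * real (L - 1)" by (simp only: mult.left_neutral)
    have h0: "exp 1 * real L ^ 2 * y * d \<ge> 0" using y(1) d1 by simp
    have "exp 1 * real L ^ 2 * y * d / (real r * real (L - 1)) \<le> exp 1 * real L ^ 2 * y * d / 1"
      by (rule frac_le[OF h0 order_refl zero_less_one h1])
    then show ?thesis by simp
  qed
  have "(exp 1 / (real L * y)) ^ L * (exp 1 * real L ^ 2 * y * d / (real r * real (L - 1))) ^ R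
      \<le> (exp 1 / y) ^ L * (exp 1 * real L ^ 2 * y * d) ^ R"
  proof (rule mult_mono)
    show "(exp 1 / (real L * y)) ^ L \<le> (exp 1 / y) ^ L"
      by (rule power_mono[OF t1]) (use y(1) L in simp)
    show "(exp 1 * real L ^ 2 * y * d / (real r * real (L - 1))) ^ R \<le> (exp 1 * real L ^ 2 * y * d) ^ R"
      by (rule power_mono[OF t2]) (use y(1) d1 in simp)
    show "0 \<le> (exp 1 / y) ^ L" using y(1) by simp
    show "0 \<le> (exp 1 * real L ^ 2 * y * d / (real r * real (L - 1))) ^ R" using y(1) d1 by simp
  qed
  also have "\<dots> = C * d ^ R * y ^ q"
  proof -
    have "(exp 1 * real L ^ 2 * y * d) ^ R = (exp 1 * real L ^ 2) ^ R * d ^ R * y ^ q * y ^ L"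
      unfolding RqL by (simp add: power_mult_distrib power_add)
    moreover have "(exp 1 / y) ^ L = exp 1 ^ L / y ^ L" by (simp add: power_divide)
    ultimately show ?thesis unfolding C_def using y(1) by (simp add: field_simps)
  qed
  also have "\<dots> \<le> C * d ^ R * (d powr (- \<alpha>)) ^ q"
  proof (rule mult_left_mono)
    show "y ^ q \<le> (d powr (- \<alpha>)) ^ q" by (rule power_mono) (use y in \<open>auto simp: \<alpha>_def\<close>)
    show "0 \<le> C * d ^ R" unfolding C_def using d1 by simp
  qed
  also have "\<dots> = C * d powr (real R - \<alpha> * real q)"
  proof -
    have a: "d ^ R = d powr (real R)" using d1 by (simp add: powr_realpow)
    have b: "(d powr (- \<alpha>)) ^ q = d powr (real q * (- \<alpha>))" using d1 by (simp add: powr_power)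
    have c: "real R - \<alpha> * real q = real R + real q * (- \<alpha>)" by simp
    show ?thesis unfolding a b c powr_add by simp
  qed
  also have "\<dots> \<le> C * d powr (-1)"
  proof (rule mult_left_mono)
    show "d powr (real R - \<alpha> * real q) \<le> d powr (-1)" by (rule powr_mono[OF expo d1])
    show "0 \<le> C" unfolding C_def by simp
  qed
  also have "\<dots> = C / d" using d1 by (simp add: powr_minus divide_inverse)
  also have "\<dots> \<le> 1 / 2" using dC d1 unfolding C_def R_def by (simp add: field_simps)
  finally show ?thesis unfolding R_def .
qed



lemma prod_lower:
  fixes N m :: nat
  assumes "4 * m \<le> N"
  shows "(real N / 2) ^ m \<le> (\<Prod>j<m. real (N - 1 - 2 * j))"
proof -
  have "(\<Prod>j<m. real N / 2) \<le> (\<Prod>j<m. real (N - 1 - 2 * j))"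
  proof (rule prod_mono)
    fix j assume "j \<in> {..<m}"
    then have j: "j < m" by simp
    then have "2 * j + 1 \<le> N" using assms by linarith
    then have e: "real (N - 1 - 2 * j) = real N - 1 - 2 * real j" by (simp add: of_nat_diff)
    have "4 * real j + 4 \<le> real N" using j assms by (simp add: Suc_le_eq)
    then show "0 \<le> real N / 2 \<and> real N / 2 \<le> real (N - 1 - 2 * j)" unfolding e by simp
  qed
  then show ?thesis by simp
qed

lemma total_bound:
  fixes n d s m K L r :: nat
  assumes sK: "s = L * K" and mK: "m = r * (L - 1) * K" and K: "K \<ge> 1" and L: "L \<ge> 2" and r: "r \<ge> 2"
    and mN: "4 * m \<le> n * d" and n: "n \<ge> 1" and d: "d \<ge> 1"
  shows "real (n choose s) * real ((s * d choose 2) choose m)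
     \<le> ((exp 1 * real n / (real L * real K)) ^ L * (exp 1 * real L ^ 2 * real K * real d / (real r * real (L - 1) * real n)) ^ (r * (L - 1))) ^ K
        * (\<Prod>j<m. real (n * d - 1 - 2 * j))"
proof -
  define B1 where "B1 = exp 1 * real n / (real L * real K)"
  define B2 where "B2 = exp 1 * real L ^ 2 * real K * real d / (real r * real (L - 1) * real n)"
  have spos: "s > 0" using sK K L by simp
  have mpos: "m > 0" using mK K L r by simp
  have L1: "real (L - 1) > 0" using L by simp
  have c1: "real (n choose s) \<le> (exp 1 * real n / real s) ^ s" by (rule choose_le_real[OF spos])
  have c2: "real ((s * d choose 2) choose m) \<le> (exp 1 * real (s * d choose 2) / real m) ^ m"
    by (rule choose_le_real[OF mpos])
  have P: "real (s * d choose 2) \<le> (real s * real d) ^ 2 / 2"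
  proof -
    have "2 * (s * d choose 2) \<le> (s * d) * (s * d)"
    proof -
      have "2 * (s * d choose 2) = 2 * ((s * d) * (s * d - 1) div 2)" by (simp add: choose_two)
      also have "\<dots> \<le> (s * d) * (s * d - 1)" by simp
      also have "\<dots> \<le> (s * d) * (s * d)" by simp
      finally show ?thesis .
    qed
    then have "2 * real (s * d choose 2) \<le> real (s * d) * real (s * d)"
      by (metis of_nat_le_iff of_nat_mult of_nat_numeral)
    then show ?thesis by (simp add: power2_eq_square)
  qed
  have c3: "(exp 1 * real (s * d choose 2) / real m) ^ m \<le> (exp 1 * ((real s * real d) ^ 2 / 2) / real m) ^ m"
  proof (rule power_mono)
    have "exp 1 * real (s * d choose 2) \<le> exp 1 * ((real s * real d) ^ 2 / 2)"
      using P by simp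
    then show "exp 1 * real (s * d choose 2) / real m \<le> exp 1 * ((real s * real d) ^ 2 / 2) / real m"
      by (rule divide_right_mono) simp
  qed simp
  have eq1: "(exp 1 * real n / real s) ^ s = (B1 ^ L) ^ K"
    unfolding B1_def sK by (simp add: power_mult[symmetric] mult.commute)
  have eq2: "(exp 1 * ((real s * real d) ^ 2 / 2) / real m) = B2 * (real (n * d) / 2)"
    unfolding B2_def sK mK using K L1 n d r by (simp add: field_simps power2_eq_square)
  have eq3: "(B2 * (real (n * d) / 2)) ^ m = (B2 ^ (r * (L - 1))) ^ K * (real (n * d) / 2) ^ m"
    by (subst power_mult_distrib) (simp only: mK power_mult)
  have "real (n choose s) * real ((s * d choose 2) choose m)
      \<le> (exp 1 * real n / real s) ^ s * (exp 1 * ((real s * real d) ^ 2 / 2) / real m) ^ m"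
    apply (rule mult_mono) using c1 c2 c3 by auto
  also have "\<dots> = (B1 ^ L * B2 ^ (r * (L - 1))) ^ K * (real (n * d) / 2) ^ m"
    unfolding eq1 eq2 eq3 by (simp add: power_mult_distrib)
  also have "\<dots> \<le> (B1 ^ L * B2 ^ (r * (L - 1))) ^ K * (\<Prod>j<m. real (n * d - 1 - 2 * j))"
    apply (rule mult_left_mono) using prod_lower[OF mN] unfolding B1_def B2_def by auto
  finally show ?thesis unfolding B1_def B2_def .
qed




lemma cells_finite: "finite (cells n d)" unfolding cells_def by simp
lemma cells_card: "card (cells n d) = n * d" unfolding cells_def by (simp add: card_cartesian_product)

lemma event_bound:
  assumes "card F = m"
  shows "card {M \<in> perfect_matchings n d. F \<subseteq> M} * (\<Prod>j<m. n * d - 1 - 2 * j) \<le> card (perfect_matchings n d)"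
proof (cases "{M \<in> perfect_matchings n d. F \<subseteq> M} = {}")
  case True then show ?thesis by (simp only: True card.empty mult_0 zero_le)
next
  case False
  let ?W = "cells n d"
  obtain M0 where M0: "M0 \<in> pm ?W" "F \<subseteq> M0" using False pm_cells by auto
  have a: "\<forall>e\<in>M0. card e = 2 \<and> e \<subseteq> ?W" and b: "\<forall>e\<in>M0. \<forall>e'\<in>M0. e \<noteq> e' \<longrightarrow> e \<inter> e' = {}"
    using M0(1) unfolding pm_def by auto
  have "M0 \<subseteq> Pow ?W" using M0(1) unfolding pm_def by auto
  then have "finite M0" by (rule finite_subset) (simp add: cells_finite)
  then have finF: "finite F" using M0(2) finite_subset by auto
  have "card (\<Union>F) = sum card F"
  proof (rule card_Union_disjoint)
    show "pairwise disjnt F" unfolding pairwise_def disjnt_def using b M0(2) by blast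
    fix A assume "A \<in> F" then show "finite A" using a M0(2) by (metis card.infinite subsetD zero_neq_numeral)
  qed
  also have "\<dots> = sum (\<lambda>_. 2) F" apply (rule sum.cong) using a M0(2) by auto
  finally have cU: "card (\<Union>F) = 2 * m" using assms by simp
  have UW: "\<Union>F \<subseteq> ?W" using a M0(2) by blast
  have 1: "card {M \<in> pm ?W. F \<subseteq> M} \<le> card (pm (?W - \<Union>F))"
    by (rule pm_fixed[OF cells_finite M0(2) M0(1)])
  have 2: "(\<Prod>j<m. card ?W - 1 - 2 * j) * card (pm (?W - \<Union>F)) \<le> card (pm ?W)"
    by (rule pm_prod[OF cells_finite UW cU])
  show ?thesis using 1 2 unfolding pm_cells cells_card
    by (metis (no_types, lifting) dual_order.trans mult.commute mult_le_mono2)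
qed

lemma PM_pos:
  assumes "even (n * d)"
  shows "card (perfect_matchings n d) \<ge> 1"
proof -
  let ?W = "cells n d"
  have c: "card ?W = 2 * (n * d div 2)" using assms cells_card by simp
  have 2: "(\<Prod>j<n * d div 2. card ?W - 1 - 2 * j) * card (pm (?W - ?W)) \<le> card (pm ?W)"
    by (rule pm_prod[OF cells_finite order_refl c])
  have "1 \<le> (\<Prod>j<n * d div 2. card ?W - 1 - 2 * j)"
  proof (rule prod_ge_1)
    fix j assume "j \<in> {..<n * d div 2}"
    then show "1 \<le> card ?W - 1 - 2 * j" using c by simp
  qed
  moreover have "card (pm ({}::(nat \<times> nat) set)) = 1" by (simp add: pm_empty)
  ultimately show ?thesis using 2 unfolding pm_cells by simp
qed

definition Idx :: "nat \<Rightarrow> nat \<Rightarrow> nat \<Rightarrow> nat \<Rightarrow> (nat set \<times> (nat \<times> nat) set set) set" where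
  "Idx n d s m = Sigma {U. U \<subseteq> {0..<n} \<and> card U = s} (\<lambda>U. {F. F \<subseteq> {e. e \<subseteq> U \<times> {0..<d} \<and> card e = 2} \<and> card F = m})"

lemma finite_Idx: "finite (Idx n d s m)"
proof -
  have "Idx n d s m \<subseteq> Pow {0..<n} \<times> Pow (Pow ({0..<n} \<times> {0..<d}))"
    unfolding Idx_def by auto
  then show ?thesis by (rule finite_subset) simp
qed

lemma card_Idx: "card (Idx n d s m) = (n choose s) * ((s * d choose 2) choose m)"
proof -
  have inner: "card {F. F \<subseteq> {e. e \<subseteq> U \<times> {0..<d} \<and> card e = 2} \<and> card F = m} = (s * d choose 2) choose m"
    if "U \<subseteq> {0..<n}" "card U = s" for U
  proof -
    have "finite U" using that(1) by (rule finite_subset) simp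
    then have fU: "finite (U \<times> {0..<d})" by simp
    have "card {e. e \<subseteq> U \<times> {0..<d} \<and> card e = 2} = card (U \<times> {0..<d}) choose 2"
      by (rule n_subsets[OF fU])
    also have "\<dots> = s * d choose 2" using that by (simp add: card_cartesian_product)
    finally have cp: "card {e. e \<subseteq> U \<times> {0..<d} \<and> card e = 2} = s * d choose 2" .
    have fE: "finite {e. e \<subseteq> U \<times> {0..<d} \<and> card e = 2}" using fU by simp
    show ?thesis using n_subsets[OF fE, of m] unfolding cp .
  qed
  have fin2: "\<forall>U\<in>{U. U \<subseteq> {0..<n} \<and> card U = s}. finite {F. F \<subseteq> {e. e \<subseteq> U \<times> {0..<d} \<and> card e = 2} \<and> card F = m}"
  proof
    fix U assume "U \<in> {U. U \<subseteq> {0..<n} \<and> card U = s}"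
    then have "finite U" using finite_subset[of U "{0..<n}"] by simp
    then have "finite (U \<times> {0..<d})" by simp
    then show "finite {F. F \<subseteq> {e. e \<subseteq> U \<times> {0..<d} \<and> card e = 2} \<and> card F = m}" by simp
  qed
  have "card (Idx n d s m) = (\<Sum>U\<in>{U. U \<subseteq> {0..<n} \<and> card U = s}. (s * d choose 2) choose m)"
    unfolding Idx_def using fin2 inner by (simp add: card_SigmaI)
  also have "\<dots> = card {U. U \<subseteq> {0..<n} \<and> card U = s} * ((s * d choose 2) choose m)" by simp
  also have "\<dots> = (n choose s) * ((s * d choose 2) choose m)" using n_subsets[of "{0..<n}" s] by simp
  finally show ?thesis .
qed

lemma full_contagious:
  "contagious n r M {0..<n}"
proof -
  have fx: "bp_step n r M {0..<n} = {0..<n}" unfolding bp_step_def by auto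
  have "(bp_step n r M ^^ i) {0..<n} = {0..<n}" for i by (induction i) (simp_all add: fx)
  then show ?thesis unfolding contagious_def bp_closure_def by simp
qed

lemma min_contagious_ex:
  "\<exists>A. contagious n r M A \<and> card A = min_contagious n r M"
proof -
  have "\<exists>k A. contagious n r M A \<and> card A = k" using full_contagious by blast
  then show ?thesis unfolding min_contagious_def by (rule LeastI_ex)
qed

lemma bad_cover:
  assumes M: "M \<in> perfect_matchings n d" and r: "r \<ge> 1"
    and k: "min_contagious n r M \<le> K" and Ks: "K \<le> s" and sn: "s \<le> n" and m: "m \<le> r * (s - K)"
  shows "\<exists>i\<in>Idx n d s m. M \<in> {M \<in> perfect_matchings n d. snd i \<subseteq> M}"
proof -
  obtain A0 where A0: "contagious n r M A0" "card A0 = min_contagious n r M" using min_contagious_ex by blast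
  have MP: "M \<in> pm (cells n d)" using M pm_cells by simp
  have "M \<subseteq> Pow (cells n d)" using MP unfolding pm_def by auto
  then have finM: "finite M" by (rule finite_subset) (simp add: cells_finite)
  obtain U where U: "U \<subseteq> {0..<n}" "card U = s" "card (eU M U) \<ge> r * (s - card A0)"
    using det_main[OF finM A0(1) r, of s] A0(2) k Ks sn by auto
  have "r * (s - K) \<le> r * (s - card A0)" by (intro mult_le_mono2 diff_le_mono2) (use A0(2) k in simp)
  then have "m \<le> card (eU M U)" using U(3) m by linarith
  then obtain F where F: "F \<subseteq> eU M U" "card F = m" "finite F" by (rule obtain_subset_with_card_n)
  have a: "\<forall>e\<in>M. card e = 2 \<and> e \<subseteq> cells n d" using MP unfolding pm_def by auto
  have FM: "F \<subseteq> M" using F(1) unfolding eU_def by auto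
  have "F \<subseteq> {e. e \<subseteq> U \<times> {0..<d} \<and> card e = 2}"
  proof
    fix e assume e: "e \<in> F"
    then have "e \<in> M" "e \<subseteq> U \<times> UNIV" using F(1) unfolding eU_def by auto
    then show "e \<in> {e. e \<subseteq> U \<times> {0..<d} \<and> card e = 2}" using a unfolding cells_def by auto
  qed
  then have "(U, F) \<in> Idx n d s m" unfolding Idx_def using U F by simp
  then show ?thesis using FM M by force
qed




lemma fixed_n:
  fixes r L n d K :: nat and \<epsilon> \<delta> :: real
  assumes r: "r \<ge> 2" and L: "L \<ge> 2" and eps: "\<epsilon> > 0"
    and Lc: "\<epsilon> * ((real r - 1) * real L - real r) \<ge> real r / (real r - 1) + 1"
    and d1: "real d \<ge> 1"
    and dC: "real d \<ge> 2 * (exp 1 ^ L * (exp 1 * real L ^ 2) ^ (r * (L - 1)))"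
    and dL: "real d \<ge> 4 * real r * real L"
    and Kdef: "K = nat \<lfloor>real n * real d powr (- (real r / (real r - 1) + \<epsilon>))\<rfloor>"
    and K1: "K \<ge> 1" and Kd: "(1/2) ^ K \<le> \<delta>"
    and ev: "even (n * d)"
  shows "config_prob n d (\<lambda>M. real (min_contagious n r M)
                  \<ge> real n * real d powr (- (real r / (real r - 1) + \<epsilon>))) \<ge> 1 - \<delta>"
proof -
  define \<alpha> where "\<alpha> = real r / (real r - 1) + \<epsilon>"
  define y0 where "y0 = real n * real d powr (- \<alpha>)"
  define s where "s = L * K"
  define m where "m = r * (L - 1) * K"
  define PM where "PM = perfect_matchings n d"
  define good where "good = (\<lambda>M. real (min_contagious n r M) \<ge> real n * real d powr (- \<alpha>))"
  define Bad where "Bad = {M \<in> PM. \<not> good M}"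
  define P where "P = (\<Prod>j<m. n * d - 1 - 2 * j)"
  have rr: "real r - 1 > 0" using r by simp
  have "real r / (real r - 1) \<ge> 1" using rr by (simp add: field_simps)
  then have a1: "\<alpha> \<ge> 1" unfolding \<alpha>_def using eps by linarith
  have dpos: "real d > 0" using d1 by simp
  have dpa: "real d powr \<alpha> \<ge> real d" using powr_mono[OF a1 d1] d1 by simp
  have dpm: "real d powr (- \<alpha>) = 1 / real d powr \<alpha>" by (simp add: powr_minus divide_inverse)
  have dpm2: "real d powr (- \<alpha>) \<le> 1 / real d"
    unfolding dpm using dpa dpos by (simp add: frac_le)
  have K_le: "real K \<le> y0" unfolding Kdef y0_def \<alpha>_def
    by (rule of_nat_floor) simp
  have npos: "n \<ge> 1"
  proof (rule ccontr)
    assume "\<not> n \<ge> 1" then have "n = 0" by simp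
    then have "y0 = 0" unfolding y0_def by simp
    then show False using K_le K1 by simp
  qed
  have y0n: "y0 \<le> real n / real d" unfolding y0_def using dpm2 npos
    by (metis divide_inverse mult_left_mono of_nat_0_le_iff mult_1_right inverse_eq_divide)
  have Ln: "real L * real K \<le> real n / (4 * real r)"
  proof -
    have "real K \<le> real n / real d" using K_le y0n by linarith
    then have "real L * real K \<le> real L * (real n / real d)" by (rule mult_left_mono) simp
    also have "\<dots> = real n * real L / real d" by simp
    also have "\<dots> \<le> real n * real L / (4 * real r * real L)"
      apply (rule divide_left_mono) using dL L r dpos by (auto intro!: mult_pos_pos)
    also have "\<dots> = real n / (4 * real r)" using L by simp
    finally show ?thesis .
  qed
  have sn: "s \<le> n"
  proof -
    have "real n * 1 \<le> real n * (4 * real r)" by (rule mult_left_mono) (use r in simp_all)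
    then have "real n / (4 * real r) \<le> real n" using r by (simp add: divide_le_eq)
    then have "real s \<le> real n" using Ln unfolding s_def by simp
    then show ?thesis by simp
  qed
  have mN: "4 * m \<le> n * d"
  proof -
    have "real m \<le> real r * (real L * real K)" unfolding m_def using L
      by (simp add: of_nat_diff algebra_simps mult_left_mono)
    also have "\<dots> \<le> real r * (real n / (4 * real r))" by (rule mult_left_mono[OF Ln]) simp
    also have "\<dots> = real n / 4" using r by simp
    finally have "4 * real m \<le> real n" by simp
    also have "\<dots> \<le> real n * real d" using mult_left_mono[OF d1, of "real n"] by simp
    finally have "real (4 * m) \<le> real (n * d)" by simp
    then show ?thesis by (simp only: of_nat_le_iff)
  qed
  have Ks: "K \<le> s" unfolding s_def using L by simp
  have msK: "m \<le> r * (s - K)"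
  proof -
    have "s - K = (L - 1) * K" unfolding s_def by (simp add: diff_mult_distrib)
    then show ?thesis unfolding m_def by simp
  qed
  let ?E = "\<lambda>i. {M \<in> perfect_matchings n d. snd i \<subseteq> M}"
  have cover: "Bad \<subseteq> (\<Union>i\<in>Idx n d s m. ?E i)"
  proof
    fix M assume "M \<in> Bad"
    then have M: "M \<in> PM" "\<not> good M" unfolding Bad_def by auto
    then have "real (min_contagious n r M) < y0" unfolding good_def y0_def by simp
    then have "min_contagious n r M \<le> K" unfolding Kdef y0_def \<alpha>_def
      by (intro le_nat_floor) simp
    then show "M \<in> (\<Union>i\<in>Idx n d s m. ?E i)"
      using bad_cover[of M n d r K s m] M(1) r Ks sn msK unfolding PM_def by auto
  qed
  have finPM: "finite PM" unfolding PM_def pm_cells by (rule finite_pm[OF cells_finite])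
  have cBad: "card Bad \<le> (\<Sum>i\<in>Idx n d s m. card (?E i))"
  proof -
    have "card Bad \<le> card (\<Union>i\<in>Idx n d s m. ?E i)"
    proof (rule card_mono[OF _ cover])
      have "(\<Union>i\<in>Idx n d s m. ?E i) \<subseteq> PM" unfolding PM_def by auto
      then show "finite (\<Union>i\<in>Idx n d s m. ?E i)" using finPM by (rule finite_subset)
    qed
    also have "\<dots> \<le> (\<Sum>i\<in>Idx n d s m. card (?E i))" by (rule card_UN_le[OF finite_Idx])
    finally show ?thesis .
  qed
  have ev_b: "card (?E i) * P \<le> card PM" if "i \<in> Idx n d s m" for i
  proof -
    have "card (snd i) = m" using that unfolding Idx_def by auto
    from event_bound[OF this, of n d] show ?thesis unfolding P_def PM_def .
  qed
  have "card Bad * P \<le> (\<Sum>i\<in>Idx n d s m. card (?E i)) * P" using cBad by simp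
  also have "\<dots> = (\<Sum>i\<in>Idx n d s m. card (?E i) * P)" by (simp add: sum_distrib_right)
  also have "\<dots> \<le> (\<Sum>i\<in>Idx n d s m. card PM)" by (rule sum_mono) (use ev_b in auto)
  also have "\<dots> = card (Idx n d s m) * card PM" by simp
  finally have main_nat: "card Bad * P \<le> card (Idx n d s m) * card PM" .
  define B where "B = (exp 1 * real n / (real L * real K)) ^ L * (exp 1 * real L ^ 2 * real K * real d / (real r * real (L - 1) * real n)) ^ (r * (L - 1))"
  have PR: "real P = (\<Prod>j<m. real (n * d - 1 - 2 * j))" unfolding P_def by simp
  have Ppos: "real P > 0"
  proof -
    have "0 < (real (n * d) / 2) ^ m" using npos d1 by simp
    also have "\<dots> \<le> real P" unfolding PR by (rule prod_lower[OF mN])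
    finally show ?thesis .
  qed
  have tb: "real (card (Idx n d s m)) \<le> B ^ K * real P"
    unfolding card_Idx PR B_def
    using total_bound[OF s_def m_def K1 L r mN npos] d1 by simp
  have B2: "B \<le> 1 / 2"
  proof -
    define y where "y = real K / real n"
    have ypos: "0 < y" unfolding y_def using K1 npos by simp
    have yle: "y \<le> real d powr (- (real r / (real r - 1) + \<epsilon>))"
      unfolding y_def using K_le npos unfolding y0_def \<alpha>_def by (simp add: field_simps)
    have "B = (exp 1 / (real L * y)) ^ L * (exp 1 * real L ^ 2 * y * real d / (real r * real (L - 1))) ^ (r * (L - 1))"
      unfolding B_def y_def using npos K1 by (simp add: field_simps)
    also have "\<dots> \<le> 1 / 2" by (rule inner[OF r L eps Lc d1 dC ypos yle])
    finally show ?thesis .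
  qed
  have B0: "B \<ge> 0" unfolding B_def by simp
  have BK: "B ^ K \<le> \<delta>"
  proof -
    have "B ^ K \<le> (1/2) ^ K" by (rule power_mono[OF B2 B0])
    then show ?thesis using Kd by simp
  qed
  have "real (card Bad) * real P \<le> real (card (Idx n d s m)) * real (card PM)"
    using main_nat by (metis of_nat_le_iff of_nat_mult)
  also have "\<dots> \<le> B ^ K * real P * real (card PM)" using tb by (simp add: mult_right_mono)
  also have "\<dots> \<le> \<delta> * real P * real (card PM)" using BK Ppos by (simp add: mult_right_mono)
  finally have "real (card Bad) * real P \<le> (\<delta> * real (card PM)) * real P" by (simp add: algebra_simps)
  then have cB: "real (card Bad) \<le> \<delta> * real (card PM)" using Ppos by simp
  have PMpos: "real (card PM) > 0" using PM_pos[OF ev] unfolding PM_def by simp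
  have split: "card PM = card {M \<in> PM. good M} + card Bad"
  proof -
    have "PM = {M \<in> PM. good M} \<union> Bad" unfolding Bad_def by auto
    moreover have "{M \<in> PM. good M} \<inter> Bad = {}" unfolding Bad_def by auto
    ultimately show ?thesis using finPM by (metis card_Un_disjoint finite_Un)
  qed
  have "config_prob n d good = real (card {M \<in> PM. good M}) / real (card PM)"
    unfolding config_prob_def PM_def ..
  also have "\<dots> = (real (card PM) - real (card Bad)) / real (card PM)" using split by simp
  also have "\<dots> \<ge> 1 - \<delta>" using cB PMpos by (simp add: field_simps)
  finally show ?thesis unfolding good_def \<alpha>_def .
qed




theorem mainTheorem19:
  fixes r :: nat and \<epsilon> :: real
  assumes "r \<ge> 2" and "\<epsilon> > 0"
  shows "\<exists>d0::nat. \<forall>d::nat. d > d0 \<longrightarrow>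
           (\<forall>\<delta>>0. \<exists>N. \<forall>n\<ge>N. even (n * d) \<longrightarrow>
              config_prob n d (\<lambda>M. real (min_contagious n r M)
                  \<ge> real n * real d powr (- (real r / (real r - 1) + \<epsilon>))) \<ge> 1 - \<delta>)"
proof -
  note r = assms(1) and eps = assms(2)
  define \<alpha> where "\<alpha> = real r / (real r - 1) + \<epsilon>"
  define A where "A = (real r / (real r - 1) + 1) / (\<epsilon> * (real r - 1))"
  define L where "L = nat \<lceil>A\<rceil> + r + 2"
  have rr: "real r - 1 > 0" using r by simp
  have L2: "L \<ge> 2" unfolding L_def by simp
  have LA: "real L \<ge> A + real r"
  proof -
    have "A \<le> real (nat \<lceil>A\<rceil>)" by (simp add: real_nat_ceiling_ge)
    then show ?thesis unfolding L_def by simp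
  qed
  have Lc: "\<epsilon> * ((real r - 1) * real L - real r) \<ge> real r / (real r - 1) + 1"
  proof -
    have "(real r - 1) * real L \<ge> (real r - 1) * (A + real r)"
      by (rule mult_left_mono[OF LA]) (use rr in simp)
    moreover have "(real r - 1) * real r \<ge> real r" using r by (simp add: algebra_simps)
    ultimately have "(real r - 1) * real L - real r \<ge> (real r - 1) * A"
      by (simp add: algebra_simps)
    then have "\<epsilon> * ((real r - 1) * real L - real r) \<ge> \<epsilon> * ((real r - 1) * A)"
      by (rule mult_left_mono) (use eps in simp)
    moreover have "\<epsilon> * ((real r - 1) * A) = real r / (real r - 1) + 1"
    proof -
      have nz: "\<epsilon> * (real r - 1) \<noteq> 0" using eps rr by simp
      have "\<epsilon> * ((real r - 1) * A) = (\<epsilon> * (real r - 1)) * A" by (simp add: mult.assoc)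
      also have "\<dots> = real r / (real r - 1) + 1" unfolding A_def using nz by simp
      finally show ?thesis .
    qed
    ultimately show ?thesis by simp
  qed
  define C where "C = exp 1 ^ L * (exp 1 * real L ^ 2) ^ (r * (L - 1))"
  define d0 where "d0 = nat \<lceil>2 * C\<rceil> + 4 * r * L"
  show ?thesis
  proof (rule exI[of _ d0], intro allI impI)
    fix d :: nat and \<delta> :: real
    assume dd0: "d > d0" and dpos: "\<delta> > 0"
    have d1: "real d \<ge> 1" using dd0 by simp
    have dC: "real d \<ge> 2 * C"
    proof -
      have "2 * C \<le> real (nat \<lceil>2 * C\<rceil>)" by (simp add: real_nat_ceiling_ge)
      also have "\<dots> \<le> real d"
      proof -
        have "nat \<lceil>2 * C\<rceil> \<le> d" using dd0 unfolding d0_def by (metis add_lessD1 less_imp_le)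
        then show ?thesis by (simp only: of_nat_le_iff)
      qed
      finally show ?thesis .
    qed
    have dL: "real d \<ge> 4 * real r * real L"
    proof -
      have "4 * r * L \<le> d" using dd0 unfolding d0_def by simp
      then have "real (4 * r * L) \<le> real d" by (simp only: of_nat_le_iff)
      then show ?thesis by simp
    qed
    obtain k where k: "(1/2::real) ^ k < \<delta>" using real_arch_pow_inv[OF dpos, of "1/2"] by auto
    define N where "N = nat \<lceil>(real k + 2) * real d powr \<alpha>\<rceil>"
    have dpa: "real d powr \<alpha> > 0" using d1 by simp
    show "\<exists>N. \<forall>n\<ge>N. even (n * d) \<longrightarrow>
              config_prob n d (\<lambda>M. real (min_contagious n r M)
                  \<ge> real n * real d powr (- (real r / (real r - 1) + \<epsilon>))) \<ge> 1 - \<delta>"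
    proof (rule exI[of _ N], intro allI impI)
      fix n assume nN: "n \<ge> N" and ev: "even (n * d)"
      define K where "K = nat \<lfloor>real n * real d powr (- (real r / (real r - 1) + \<epsilon>))\<rfloor>"
      have "(real k + 2) * real d powr \<alpha> \<le> real N" unfolding N_def by (simp add: real_nat_ceiling_ge)
      also have "\<dots> \<le> real n" using nN by simp
      finally have "(real k + 2) * real d powr \<alpha> \<le> real n" .
      then have y0: "real k + 2 \<le> real n * real d powr (- \<alpha>)"
        using dpa by (simp add: powr_minus field_simps)
      have Kk: "k + 1 \<le> K" unfolding K_def \<alpha>_def[symmetric]
        by (rule le_nat_floor) (use y0 in simp)
      have K1: "K \<ge> 1" using Kk by simp
      have Kd: "(1/2) ^ K \<le> \<delta>"
      proof -
        have "(1/2::real) ^ K \<le> (1/2) ^ k" by (rule power_decreasing) (use Kk in simp_all)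
        then show ?thesis using k by linarith
      qed
      show "config_prob n d (\<lambda>M. real (min_contagious n r M)
                  \<ge> real n * real d powr (- (real r / (real r - 1) + \<epsilon>))) \<ge> 1 - \<delta>"
        by (rule fixed_n[OF r L2 eps Lc d1 dC[unfolded C_def] dL K_def K1 Kd ev])
    qed
  qed
qed



end
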